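(* Let $\alpha\in\mathbb N$ and $n\ge 0$. The $(i,j)$-th entry ($0\le i,j\le n$) of the inverse of the matrix $(1/F_{\alpha+i+j})_{0\le i,j\le n}$ is $$(-1)^{n(\alpha+i+j)-\binom{i}{2}-\binom{j}{2}}F_{\alpha+i+j}\binom{\alpha+n+i}{n-j}_{\mathbb F}\binom{\alpha+n+j}{n-i}_{\mathbb F}\binom{\alpha+i+j-1}{i}_{\mathbb F}\binom{\alpha+i+j-1}{j}_{\mathbb F}.$$
   Context: $F_n$ are the Fibonacci numbers ($F_0=0,F_1=1,F_{n+1}=F_n+F_{n-1}$). The Fibonomial coefficients are $\binom{n}{k}_{\mathbb F}=\prod_{i=1}^k F_{n-i+1}/F_i$ for $0\le k\le n$ (empty product $=1$). *)

theory Defs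
  imports "HOL-Number_Theory.Fib" "Jordan_Normal_Form.Matrix"
begin

definition fibonomial :: "nat \<Rightarrow> nat \<Rightarrow> real" where
  "fibonomial n k = (\<Prod>i=1..k. real (fib (n - i + 1)) / real (fib i))"

end

theory Submission
  imports Defs "HOL-Computational_Algebra.Polynomial" "Jordan_Normal_Form.Determinant"
begin


lemma lagrange_interp:
  fixes t :: "nat \<Rightarrow> real" and R :: "real poly"
  assumes inj: "\<And>k m. k \<le> n \<Longrightarrow> m \<le> n \<Longrightarrow> k \<noteq> m \<Longrightarrow> t k \<noteq> t m"
    and deg: "degree R \<le> n"
  shows "poly R x = (\<Sum>k\<le>n. poly R (t k) * (\<Prod>m\<in>{..n}-{k}. (x - t m)) / (\<Prod>m\<in>{..n}-{k}. (t k - t m)))"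
proof -
  define Q where "Q = (\<Sum>k\<le>n. smult (poly R (t k) / (\<Prod>m\<in>{..n}-{k}. (t k - t m))) (\<Prod>m\<in>{..n}-{k}. [:- t m, 1:]))"
  have polyQ: "poly Q y = (\<Sum>k\<le>n. poly R (t k) * (\<Prod>m\<in>{..n}-{k}. (y - t m)) / (\<Prod>m\<in>{..n}-{k}. (t k - t m)))" for y
    unfolding Q_def by (simp add: poly_sum poly_prod)
  have degQ: "degree Q \<le> n"
    unfolding Q_def
  proof (rule degree_sum_le)
    fix k assume "k \<in> {..n}"
    have "degree (\<Prod>m\<in>{..n}-{k}. [:- t m, 1:]) \<le> (\<Sum>m\<in>{..n}-{k}. degree [:- t m, 1:])"
      using degree_prod_sum_le[of "{..n}-{k}" "\<lambda>m. [:- t m, 1:]"] by (simp add: o_def)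
    also have "\<dots> \<le> n" using \<open>k \<in> {..n}\<close> by simp
    finally show "degree (smult (poly R (t k) / (\<Prod>m\<in>{..n}-{k}. (t k - t m))) (\<Prod>m\<in>{..n}-{k}. [:- t m, 1:])) \<le> n"
      by (meson degree_smult_le order_trans)
  qed (rule finite_atMost)
  have ev: "poly R (t i) = poly Q (t i)" if "i \<le> n" for i
  proof -
    have "poly Q (t i) = (\<Sum>k\<in>{i}. poly R (t k) * (\<Prod>m\<in>{..n}-{k}. (t i - t m)) / (\<Prod>m\<in>{..n}-{k}. (t k - t m)))"
      unfolding polyQ
    proof (rule sum.mono_neutral_right)
      show "\<forall>k\<in>{..n} - {i}. poly R (t k) * (\<Prod>m\<in>{..n}-{k}. (t i - t m)) / (\<Prod>m\<in>{..n}-{k}. (t k - t m)) = 0"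
      proof
        fix k assume k: "k \<in> {..n} - {i}"
        have "(\<Prod>m\<in>{..n}-{k}. (t i - t m)) = 0"
          using k that by (intro prod_zero) auto
        thus "poly R (t k) * (\<Prod>m\<in>{..n}-{k}. (t i - t m)) / (\<Prod>m\<in>{..n}-{k}. (t k - t m)) = 0" by simp
      qed
    qed (use that in auto)
    also have "\<dots> = poly R (t i)"
    proof -
      have "(\<Prod>m\<in>{..n}-{i}. (t i - t m)) \<noteq> 0"
        using inj that by (subst prod_zero_iff) auto
      thus ?thesis by simp
    qed
    finally show ?thesis by simp
  qed
  have RQ: "R = Q"
  proof (rule poly_eqI_degree[of "t ` {..n}"])
    show "\<And>x. x \<in> t ` {..n} \<Longrightarrow> poly R x = poly Q x" using ev by auto
    have "card (t ` {..n}) = n + 1"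
      by (subst card_image) (auto intro!: inj_onI dest: inj)
    thus "degree R < card (t ` {..n})" "degree Q < card (t ` {..n})" using deg degQ by auto
  qed
  have "poly R x = poly Q x" by (simp only: RQ)
  also have "\<dots> = (\<Sum>k\<le>n. poly R (t k) * (\<Prod>m\<in>{..n}-{k}. (x - t m)) / (\<Prod>m\<in>{..n}-{k}. (t k - t m)))"
    by (rule polyQ)
  finally show ?thesis .
qed


lemma prod_remove_nat: "k \<le> n \<Longrightarrow> (\<Prod>m\<le>n. f m) = f k * (\<Prod>m\<in>{..n}-{k}. f m)"
  for f :: "nat \<Rightarrow> 'a::comm_monoid_mult"
  by (rule prod.remove) auto

lemma card_remove_nat: "k \<le> n \<Longrightarrow> card ({..n}-{k}) = n" by simp

lemma cauchy_hom:
  fixes p pp q qq :: "nat \<Rightarrow> real"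
  assumes pp: "\<And>i. i \<le> n \<Longrightarrow> pp i \<noteq> 0" and qq: "\<And>k. k \<le> n \<Longrightarrow> qq k \<noteq> 0"
    and PQ: "\<And>i k. i \<le> n \<Longrightarrow> k \<le> n \<Longrightarrow> p i * qq k - pp i * q k \<noteq> 0"
    and QQ: "\<And>k m. k \<le> n \<Longrightarrow> m \<le> n \<Longrightarrow> k \<noteq> m \<Longrightarrow> q k * qq m - qq k * q m \<noteq> 0"
    and PP: "\<And>j l. j \<le> n \<Longrightarrow> l \<le> n \<Longrightarrow> j \<noteq> l \<Longrightarrow> p j * pp l - pp j * p l \<noteq> 0"
    and ij: "i \<le> n" "j \<le> n"
  shows "(\<Sum>k\<le>n. 1 / (p i * qq k - pp i * q k) *
     ((\<Prod>l\<in>{..n}-{j}. q k * pp l - qq k * p l) * (\<Prod>m\<le>n. p j * qq m - pp j * q m) /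
      ((\<Prod>m\<in>{..n}-{k}. q k * qq m - qq k * q m) * (\<Prod>l\<in>{..n}-{j}. p j * pp l - pp j * p l))))
    = (if i = j then 1 else 0)"
proof -
  define t where "t k = q k / qq k" for k
  define s where "s = p i / pp i"
  define R where "R = (\<Prod>l\<in>{..n}-{j}. [:- p l, pp l:])"
  define A2 where "A2 = (\<Prod>m\<le>n. p j * qq m - pp j * q m)"
  define A4 where "A4 = (\<Prod>l\<in>{..n}-{j}. p j * pp l - pp j * p l)"
  define QQQ where "QQQ = (\<Prod>m\<le>n. qq m)"
  have polyR: "poly R x = (\<Prod>l\<in>{..n}-{j}. pp l * x - p l)" for x
    unfolding R_def by (simp add: poly_prod algebra_simps)
  have degR: "degree R \<le> n"
  proof -
    have "degree R \<le> (\<Sum>l\<in>{..n}-{j}. degree [:- p l, pp l:])"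
      unfolding R_def using degree_prod_sum_le[of "{..n}-{j}" "\<lambda>l. [:- p l, pp l:]"] by (simp add: o_def)
    also have "\<dots> \<le> (\<Sum>l\<in>{..n}-{j}. 1)" by (intro sum_mono) simp
    also have "\<dots> = n" using ij by simp
    finally show ?thesis .
  qed
  have tdiff: "t k - t m = (q k * qq m - qq k * q m) / (qq k * qq m)" if "k \<le> n" "m \<le> n" for k m
    using qq that unfolding t_def by (simp add: field_simps)
  have tinj: "t k \<noteq> t m" if "k \<le> n" "m \<le> n" "k \<noteq> m" for k m
    using tdiff[OF that(1,2)] QQ[OF that] qq that by auto
  have f3: "p i * qq k - pp i * q k = pp i * qq k * (s - t k)" if "k \<le> n" for k
    using pp qq ij that unfolding s_def t_def by (simp add: field_simps)
  have st: "s \<noteq> t k" if "k \<le> n" for k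
    using f3[OF that] PQ[OF ij(1) that] by auto
  have f1: "(\<Prod>l\<in>{..n}-{j}. q k * pp l - qq k * p l) = qq k ^ n * poly R (t k)" if "k \<le> n" for k
  proof -
    have "(\<Prod>l\<in>{..n}-{j}. q k * pp l - qq k * p l) = (\<Prod>l\<in>{..n}-{j}. qq k * (pp l * t k - p l))"
      using qq[OF that] unfolding t_def by (intro prod.cong) (auto simp: field_simps)
    also have "\<dots> = qq k ^ n * poly R (t k)"
      unfolding polyR prod.distrib using ij by simp
    finally show ?thesis .
  qed
  have f2: "(\<Prod>m\<in>{..n}-{k}. q k * qq m - qq k * q m) = qq k ^ n * (\<Prod>m\<in>{..n}-{k}. qq m) * (\<Prod>m\<in>{..n}-{k}. t k - t m)" if "k \<le> n" for k
  proof -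
    have "(\<Prod>m\<in>{..n}-{k}. q k * qq m - qq k * q m) = (\<Prod>m\<in>{..n}-{k}. qq k * (qq m * (t k - t m)))"
      using qq that by (intro prod.cong) (auto simp: tdiff)
    also have "\<dots> = qq k ^ n * (\<Prod>m\<in>{..n}-{k}. qq m) * (\<Prod>m\<in>{..n}-{k}. t k - t m)"
      unfolding prod.distrib using that by simp
    finally show ?thesis .
  qed
  have Qk: "QQQ = qq k * (\<Prod>m\<in>{..n}-{k}. qq m)" if "k \<le> n" for k
    unfolding QQQ_def using that by (rule prod_remove_nat)
  have tkeq: "1 / (p i * qq k - pp i * q k) *
     ((\<Prod>l\<in>{..n}-{j}. q k * pp l - qq k * p l) * A2 /
      ((\<Prod>m\<in>{..n}-{k}. q k * qq m - qq k * q m) * A4))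
    = A2 / (A4 * pp i * QQQ) * (poly R (t k) / ((\<Prod>m\<in>{..n}-{k}. t k - t m) * (s - t k)))" if "k \<le> n" for k
  proof -
    have nz1: "(\<Prod>m\<in>{..n}-{k}. t k - t m) \<noteq> 0" using tinj that by (subst prod_zero_iff) auto
    have nz2: "(\<Prod>m\<in>{..n}-{k}. qq m) \<noteq> 0" using qq that by (subst prod_zero_iff) auto
    show ?thesis
      unfolding f1[OF that] f2[OF that] f3[OF that] Qk[OF that]
      using nz1 nz2 qq[OF that] pp[OF ij(1)] st[OF that]
      by (simp add: field_simps)
  qed
  have lag: "(\<Sum>k\<le>n. poly R (t k) / ((\<Prod>m\<in>{..n}-{k}. t k - t m) * (s - t k)))
       = poly R s / (\<Prod>m\<le>n. s - t m)"
  proof -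
    have "poly R s = (\<Sum>k\<le>n. poly R (t k) * (\<Prod>m\<in>{..n}-{k}. (s - t m)) / (\<Prod>m\<in>{..n}-{k}. (t k - t m)))"
      by (rule lagrange_interp[OF tinj degR])
    also have "\<dots> = (\<Sum>k\<le>n. (\<Prod>m\<le>n. s - t m) * (poly R (t k) / ((\<Prod>m\<in>{..n}-{k}. t k - t m) * (s - t k))))"
    proof (intro sum.cong refl)
      fix k assume k: "k \<in> {..n}"
      hence e: "(\<Prod>m\<le>n. s - t m) = (s - t k) * (\<Prod>m\<in>{..n}-{k}. s - t m)" by (intro prod_remove_nat) auto
      have nz: "(\<Prod>m\<in>{..n}-{k}. t k - t m) \<noteq> 0" using tinj k by (subst prod_zero_iff) auto
      show "poly R (t k) * (\<Prod>m\<in>{..n}-{k}. (s - t m)) / (\<Prod>m\<in>{..n}-{k}. (t k - t m))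
          = (\<Prod>m\<le>n. s - t m) * (poly R (t k) / ((\<Prod>m\<in>{..n}-{k}. t k - t m) * (s - t k)))"
        unfolding e using st[of k] k nz by (simp add: field_simps)
    qed
    also have "\<dots> = (\<Prod>m\<le>n. s - t m) * (\<Sum>k\<le>n. poly R (t k) / ((\<Prod>m\<in>{..n}-{k}. t k - t m) * (s - t k)))"
      by (simp add: sum_distrib_left)
    finally show ?thesis
      using st by (subst eq_divide_eq) (auto simp: prod_zero_iff mult.commute)
  qed
  have "(\<Sum>k\<le>n. 1 / (p i * qq k - pp i * q k) *
     ((\<Prod>l\<in>{..n}-{j}. q k * pp l - qq k * p l) * A2 /
      ((\<Prod>m\<in>{..n}-{k}. q k * qq m - qq k * q m) * A4)))
     = (\<Sum>k\<le>n. A2 / (A4 * pp i * QQQ) * (poly R (t k) / ((\<Prod>m\<in>{..n}-{k}. t k - t m) * (s - t k))))"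
    by (rule sum.cong[OF refl]) (rule tkeq, simp)
  also have "\<dots> = A2 / (A4 * pp i * QQQ) * (poly R s / (\<Prod>m\<le>n. s - t m))"
    by (simp only: lag[symmetric] sum_distrib_left)
  also have "\<dots> = (if i = j then 1 else 0)"
  proof (cases "i = j")
    case False
    have "poly R s = 0" unfolding polyR using False ij pp[OF ij(1)]
      by (subst prod_zero_iff) (auto simp: s_def intro!: bexI[of _ i])
    thus ?thesis using False by simp
  next
    case True
    have RS: "poly R s = A4 / pp i ^ n"
    proof -
      have "A4 = (\<Prod>l\<in>{..n}-{j}. pp i * (pp l * s - p l))"
        unfolding A4_def using True pp[OF ij(1)] by (intro prod.cong) (auto simp: s_def field_simps)
      also have "\<dots> = pp i ^ n * poly R s" unfolding polyR prod.distrib using ij by simp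
      finally show ?thesis using pp[OF ij(1)] by simp
    qed
    have PS: "A2 = pp i ^ (n+1) * QQQ * (\<Prod>m\<le>n. s - t m)"
    proof -
      have "A2 = (\<Prod>m\<le>n. p i * qq m - pp i * q m)" using True by (simp add: A2_def)
      also have "\<dots> = (\<Prod>m\<le>n. pp i * (qq m * (s - t m)))"
        by (intro prod.cong refl) (simp add: f3 mult.assoc)
      also have "\<dots> = pp i ^ (n+1) * QQQ * (\<Prod>m\<le>n. s - t m)"
        unfolding prod.distrib QQQ_def by simp
      finally show ?thesis .
    qed
    have nzA4: "A4 \<noteq> 0" unfolding A4_def using PP ij by (subst prod_zero_iff) auto
    have nzQ: "QQQ \<noteq> 0" unfolding QQQ_def using qq by (subst prod_zero_iff) auto
    have nzS: "(\<Prod>m\<le>n. s - t m) \<noteq> 0" using st by (subst prod_zero_iff) auto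
    show ?thesis using True nzA4 nzQ nzS pp[OF ij(1)] unfolding RS PS
      by (simp add: field_simps)
  qed
  finally show ?thesis unfolding A2_def A4_def .
qed


definition gphi :: real where "gphi = (1 + sqrt 5) / 2"
definition gpsi :: real where "gpsi = (1 - sqrt 5) / 2"

lemma gphi_psi: "gphi * gpsi = -1"
  unfolding gphi_def gpsi_def by (simp add: field_simps)

lemma gphi_nz: "gphi \<noteq> 0" and gpsi_nz: "gpsi \<noteq> 0"
  using gphi_psi by auto

lemma binet: "gphi ^ m - gpsi ^ m = sqrt 5 * real (fib m)"
  using fib_closed_form[of m] unfolding gphi_def gpsi_def by simp

lemma fib_cross: "gphi ^ a * gpsi ^ (a + d) - gpsi ^ a * gphi ^ (a + d) = - ((-1) ^ a * (sqrt 5 * real (fib d)))"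
proof -
  have "gphi ^ a * gpsi ^ (a + d) - gpsi ^ a * gphi ^ (a + d) = (gphi * gpsi) ^ a * (gpsi ^ d - gphi ^ d)"
    by (simp add: power_add power_mult_distrib algebra_simps)
  also have "\<dots> = - ((-1) ^ a * (sqrt 5 * real (fib d)))"
    unfolding gphi_psi binet[symmetric] by (simp add: algebra_simps)
  finally show ?thesis .
qed

lemma br_QQ_gt: "k < m \<Longrightarrow> gpsi ^ k * gphi ^ m - gphi ^ k * gpsi ^ m = (-1) ^ k * (sqrt 5 * real (fib (m - k)))"
  using fib_cross[of k "m - k"] by (simp add: algebra_simps)

lemma br_QQ_lt: "m < k \<Longrightarrow> gpsi ^ k * gphi ^ m - gphi ^ k * gpsi ^ m = - ((-1) ^ m * (sqrt 5 * real (fib (k - m))))"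
  using fib_cross[of m "k - m"] by (simp add: algebra_simps)

definition FF :: "nat \<Rightarrow> real" where "FF k = (\<Prod>i\<in>{1..k}. real (fib i))"

lemma FF_nz: "FF k \<noteq> 0"
  unfolding FF_def by (subst prod_zero_iff) (auto intro!: fib_neq_0_nat)

lemma prod_split_rm: "k \<le> n \<Longrightarrow> (\<Prod>m\<in>{..n}-{k}. f m) = (\<Prod>m<k. f m) * (\<Prod>m\<in>{Suc k..n}. f m)"
  for f :: "nat \<Rightarrow> 'a::comm_monoid_mult"
proof -
  assume "k \<le> n"
  hence eq: "{..n}-{k} = {..<k} \<union> {Suc k..n}" by auto
  have "(\<Prod>m\<in>{..n}-{k}. f m) = (\<Prod>m\<in>{..<k} \<union> {Suc k..n}. f m)" by (simp only: eq)
  also have "\<dots> = (\<Prod>m<k. f m) * (\<Prod>m\<in>{Suc k..n}. f m)"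
    by (rule prod.union_disjoint) auto
  finally show ?thesis .
qed

lemma reidx1: "(\<Prod>m<k. f (k - m)) = (\<Prod>i\<in>{1..k}. f i)"
  for f :: "nat \<Rightarrow> 'a::comm_monoid_mult"
  by (rule prod.reindex_bij_witness[of _ "\<lambda>i. k - i" "\<lambda>m. k - m"]) auto

lemma reidx2: "(\<Prod>m\<in>{Suc k..n}. f (m - k)) = (\<Prod>i\<in>{1..n-k}. f i)"
  for f :: "nat \<Rightarrow> 'a::comm_monoid_mult"
  by (rule prod.reindex_bij_witness[of _ "\<lambda>i. i + k" "\<lambda>m. m - k"]) auto

lemma A3_eq:
  assumes "k \<le> n"
  shows "(\<Prod>m\<in>{..n}-{k}. gpsi ^ k * gphi ^ m - gphi ^ k * gpsi ^ m)
    = (-1) ^ (\<Sum>m<k. m + 1) * (-1) ^ (k * (n - k)) * sqrt 5 ^ n * FF k * FF (n - k)"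
proof -
  have e1: "(\<Prod>m<k. gpsi ^ k * gphi ^ m - gphi ^ k * gpsi ^ m) = (\<Prod>m<k. (-1) ^ (m + 1) * sqrt 5 * real (fib (k - m)))"
    by (intro prod.cong refl) (simp add: br_QQ_lt)
  have e2: "(\<Prod>m\<in>{Suc k..n}. gpsi ^ k * gphi ^ m - gphi ^ k * gpsi ^ m) = (\<Prod>m\<in>{Suc k..n}. (-1) ^ k * sqrt 5 * real (fib (m - k)))"
    by (intro prod.cong refl) (simp add: br_QQ_gt)
  have p1: "(\<Prod>m<k. (-1) ^ (m + 1) * sqrt 5 * real (fib (k - m))) = (-1) ^ (\<Sum>m<k. m + 1) * sqrt 5 ^ k * FF k"
    unfolding prod.distrib power_sum FF_def reidx1[of "\<lambda>i. real (fib i)"] by simp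
  have p2: "(\<Prod>m\<in>{Suc k..n}. (-1) ^ k * sqrt 5 * real (fib (m - k))) = (-1) ^ (k * (n - k)) * sqrt 5 ^ (n - k) * FF (n - k)"
    unfolding prod.distrib FF_def reidx2[of "\<lambda>i. real (fib i)"] by (simp add: power_mult mult.commute)
  have "sqrt 5 ^ k * sqrt 5 ^ (n - k) = (sqrt 5 ^ n :: real)"
    using assms by (simp flip: power_add)
  then show ?thesis
    unfolding prod_split_rm[OF assms] e1 e2 p1 p2 by (simp add: algebra_simps)
qed

lemma A4_eq:
  assumes "j \<le> n"
  shows "(\<Prod>l\<in>{..n}-{j}. gphi ^ (a + j) * gpsi ^ (a + l) - gpsi ^ (a + j) * gphi ^ (a + l))
    = (-1) ^ (\<Sum>l<j. a + l) * (-1) ^ ((a + j + 1) * (n - j)) * sqrt 5 ^ n * FF j * FF (n - j)"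
proof -
  have e1: "(\<Prod>l<j. gphi ^ (a + j) * gpsi ^ (a + l) - gpsi ^ (a + j) * gphi ^ (a + l)) = (\<Prod>l<j. (-1) ^ (a + l) * sqrt 5 * real (fib (j - l)))"
  proof (intro prod.cong refl)
    fix l assume "l \<in> {..<j}"
    hence "a + j = a + l + (j - l)" by auto
    thus "gphi ^ (a + j) * gpsi ^ (a + l) - gpsi ^ (a + j) * gphi ^ (a + l) = (-1) ^ (a + l) * sqrt 5 * real (fib (j - l))"
      using fib_cross[of "a + l" "j - l"] by (simp add: algebra_simps)
  qed
  have e2: "(\<Prod>l\<in>{Suc j..n}. gphi ^ (a + j) * gpsi ^ (a + l) - gpsi ^ (a + j) * gphi ^ (a + l)) = (\<Prod>l\<in>{Suc j..n}. (-1) ^ (a + j + 1) * sqrt 5 * real (fib (l - j)))"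
  proof (intro prod.cong refl)
    fix l assume "l \<in> {Suc j..n}"
    hence "a + l = a + j + (l - j)" by auto
    thus "gphi ^ (a + j) * gpsi ^ (a + l) - gpsi ^ (a + j) * gphi ^ (a + l) = (-1) ^ (a + j + 1) * sqrt 5 * real (fib (l - j))"
      using fib_cross[of "a + j" "l - j"] by (simp add: algebra_simps)
  qed
  have p1: "(\<Prod>l<j. (-1) ^ (a + l) * sqrt 5 * real (fib (j - l))) = (-1) ^ (\<Sum>l<j. a + l) * sqrt 5 ^ j * FF j"
    unfolding prod.distrib power_sum FF_def reidx1[of "\<lambda>i. real (fib i)"] by simp
  have p2: "(\<Prod>l\<in>{Suc j..n}. (-1) ^ (a + j + 1) * sqrt 5 * real (fib (l - j))) = (-1) ^ ((a + j + 1) * (n - j)) * sqrt 5 ^ (n - j) * FF (n - j)"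
  proof -
    have c: "(\<Prod>l\<in>{Suc j..n}. (-1::real) ^ (a + j + 1)) = ((-1) ^ (a + j + 1)) ^ (n - j)" by simp
    show ?thesis unfolding prod.distrib FF_def reidx2[of "\<lambda>i. real (fib i)"] c power_mult[symmetric] by simp
  qed
  have "sqrt 5 ^ j * sqrt 5 ^ (n - j) = (sqrt 5 ^ n :: real)"
    using assms by (simp flip: power_add)
  then show ?thesis
    unfolding prod_split_rm[OF assms] e1 e2 p1 p2 by (simp add: algebra_simps)
qed

lemma A1_eq:
  assumes "j \<le> n"
  shows "(\<Prod>l\<in>{..n}-{j}. gpsi ^ k * gpsi ^ (a + l) - gphi ^ k * gphi ^ (a + l))
    = (-1) ^ n * sqrt 5 ^ n * (\<Prod>l\<in>{..n}-{j}. real (fib (a + k + l)))"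
proof -
  have "(\<Prod>l\<in>{..n}-{j}. gpsi ^ k * gpsi ^ (a + l) - gphi ^ k * gphi ^ (a + l))
     = (\<Prod>l\<in>{..n}-{j}. (-1) * sqrt 5 * real (fib (a + k + l)))"
  proof (intro prod.cong refl)
    fix l
    show "gpsi ^ k * gpsi ^ (a + l) - gphi ^ k * gphi ^ (a + l) = (-1) * sqrt 5 * real (fib (a + k + l))"
      using binet[of "a + k + l"] by (simp add: power_add algebra_simps)
  qed
  also have "\<dots> = (-1) ^ n * sqrt 5 ^ n * (\<Prod>l\<in>{..n}-{j}. real (fib (a + k + l)))"
    unfolding prod.distrib using assms by simp
  finally show ?thesis .
qed

lemma A2_eq:
  "(\<Prod>m\<le>n. gphi ^ (a + j) * gphi ^ m - gpsi ^ (a + j) * gpsi ^ m)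
    = sqrt 5 ^ (n + 1) * (\<Prod>m\<le>n. real (fib (a + j + m)))"
proof -
  have "(\<Prod>m\<le>n. gphi ^ (a + j) * gphi ^ m - gpsi ^ (a + j) * gpsi ^ m)
     = (\<Prod>m\<le>n. sqrt 5 * real (fib (a + j + m)))"
    by (intro prod.cong refl) (simp add: binet flip: power_add)
  also have "\<dots> = sqrt 5 ^ (n + 1) * (\<Prod>m\<le>n. real (fib (a + j + m)))"
    unfolding prod.distrib by simp
  finally show ?thesis .
qed



lemma fibonomial_alt: "fibonomial N K = (\<Prod>i\<in>{1..K}. real (fib (N - i + 1))) / FF K"
  unfolding fibonomial_def FF_def by (rule prod_dividef)

lemma fibo_pair:
  assumes "a \<ge> 1" "j \<le> n"
  shows "fibonomial (a + n + k) (n - j) * fibonomial (a + k + j - 1) j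
       = (\<Prod>l\<in>{..n}-{j}. real (fib (a + k + l))) / (FF (n - j) * FF j)"
proof -
  have X1: "(\<Prod>i\<in>{1..n-j}. real (fib (a + n + k - i + 1))) = (\<Prod>l\<in>{Suc j..n}. real (fib (a + k + l)))"
    by (rule prod.reindex_bij_witness[of _ "\<lambda>l. n + 1 - l" "\<lambda>i. n + 1 - i"]) (use assms in \<open>auto simp: Suc_diff_le add_ac\<close>)
  have X2: "(\<Prod>i\<in>{1..j}. real (fib (a + k + j - 1 - i + 1))) = (\<Prod>l<j. real (fib (a + k + l)))"
    by (rule prod.reindex_bij_witness[of _ "\<lambda>l. j - l" "\<lambda>i. j - i"]) (use assms in \<open>auto simp: Suc_diff_Suc\<close>)
  show ?thesis
    unfolding fibonomial_alt X1 X2 prod_split_rm[OF assms(2)] by (simp add: field_simps)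
qed

lemma choose2_Suc: "(Suc k choose 2) = k + (k choose 2)"
  by (simp add: numeral_2_eq_2)

lemma sum_lt_id: "(\<Sum>m<k. m) = (k choose 2)"
  by (induction k) (simp_all add: choose2_Suc)

lemma two_choose2: "2 * int (k choose 2) = int k * int k - int k"
  by (induction k) (simp_all add: choose2_Suc algebra_simps)

lemma sign_eq:
  assumes "k \<le> n" "j \<le> n"
  shows "(-1::real) ^ (n + ((\<Sum>m<k. m + 1) + k * (n - k)) + ((\<Sum>l<j. a + l) + (a + j + 1) * (n - j)))
       = (-1) powi (int n * int (a + k + j) - int (k choose 2) - int (j choose 2))"
proof -
  define N where "N = n + ((\<Sum>m<k. m + 1) + k * (n - k)) + ((\<Sum>l<j. a + l) + (a + j + 1) * (n - j))"
  have s1: "(\<Sum>m<k. m + 1) = (k choose 2) + k" by (induction k) (simp_all add: choose2_Suc)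
  have s2: "(\<Sum>l<j. a + l) = j * a + (j choose 2)" by (simp add: sum.distrib sum_lt_id)
  have c1: "int (k * (n - k)) = int k * (int n - int k)" using assms by (simp add: of_nat_diff)
  have c2: "int ((a + j + 1) * (n - j)) = (int a + int j + 1) * (int n - int j)" by (simp only: of_nat_mult of_nat_diff[OF assms(2)] of_nat_add of_nat_1)
  have "int N = int n + (int (k choose 2) + int k + int k * (int n - int k))
      + (int j * int a + int (j choose 2) + (int a + int j + 1) * (int n - int j))"
    unfolding N_def s1 s2 of_nat_add unfolding c1 c2 unfolding of_nat_mult by (simp add: algebra_simps)
  hence "int N = (int n * int (a + k + j) - int (k choose 2) - int (j choose 2)) + 2 * (int n - int j)"
    using two_choose2[of k] two_choose2[of j] by (simp add: algebra_simps)
  hence ev: "even (int N) \<longleftrightarrow> even (int n * int (a + k + j) - int (k choose 2) - int (j choose 2))"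
    by simp
  have "(-1::real) ^ N = (-1) powi (int N)" by simp
  also have "\<dots> = (-1) powi (int n * int (a + k + j) - int (k choose 2) - int (j choose 2))"
    using ev by (simp add: power_int_minus_left)
  finally show ?thesis unfolding N_def .
qed

lemma div_signs: "x / (((-1::real) ^ a * y) * ((-1) ^ b * z)) = (-1) ^ (a + b) * (x / (y * z))"
  by (cases "even a"; cases "even b") (auto simp: power_add)

lemma prod_remove_nat2: "k \<le> n \<Longrightarrow> (\<Prod>m\<le>n. f m) = f k * (\<Prod>m\<in>{..n}-{k}. f m)"
  for f :: "nat \<Rightarrow> 'a::comm_monoid_mult"
  by (rule prod.remove) auto

lemma entry:
  assumes a: "a \<ge> 1" and k: "k \<le> n" and j: "j \<le> n"
  shows "(-1::real) powi (int n * int (a+k+j) - int (k choose 2) - int (j choose 2))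
      * real (fib (a+k+j)) * fibonomial (a+n+k) (n-j) * fibonomial (a+n+j) (n-k)
      * fibonomial (a+k+j-1) k * fibonomial (a+k+j-1) j
   = ((\<Prod>l\<in>{..n}-{j}. gpsi ^ k * gpsi ^ (a + l) - gphi ^ k * gphi ^ (a + l))
       * (\<Prod>m\<le>n. gphi ^ (a + j) * gphi ^ m - gpsi ^ (a + j) * gpsi ^ m)
       / ((\<Prod>m\<in>{..n}-{k}. gpsi ^ k * gphi ^ m - gphi ^ k * gpsi ^ m)
          * (\<Prod>l\<in>{..n}-{j}. gphi ^ (a + j) * gpsi ^ (a + l) - gpsi ^ (a + j) * gphi ^ (a + l)))) / sqrt 5"
proof -
  define P1 where "P1 = (\<Prod>l\<in>{..n}-{j}. real (fib (a+k+l)))"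
  define P2 where "P2 = (\<Prod>m\<in>{..n}-{k}. real (fib (a+j+m)))"
  define e3 where "e3 = (\<Sum>m<k. m + 1) + k * (n - k)"
  define e4 where "e4 = (\<Sum>l<j. a + l) + (a + j + 1) * (n - j)"
  have F1: "fibonomial (a+n+k) (n-j) * fibonomial (a+k+j-1) j = P1 / (FF (n-j) * FF j)"
    using fibo_pair[OF a j, of k] unfolding P1_def .
  have F2: "fibonomial (a+n+j) (n-k) * fibonomial (a+k+j-1) k = P2 / (FF (n-k) * FF k)"
    using fibo_pair[OF a k, of j] unfolding P2_def by (simp add: add_ac)
  have A1: "(\<Prod>l\<in>{..n}-{j}. gpsi ^ k * gpsi ^ (a + l) - gphi ^ k * gphi ^ (a + l)) = (-1) ^ n * (sqrt 5 ^ n * P1)"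
    using A1_eq[OF j, of k a] unfolding P1_def by simp
  have A2: "(\<Prod>m\<le>n. gphi ^ (a + j) * gphi ^ m - gpsi ^ (a + j) * gpsi ^ m) = sqrt 5 ^ (n + 1) * (real (fib (a+k+j)) * P2)"
    using A2_eq[of a j n] prod_remove_nat2[OF k, of "\<lambda>m. real (fib (a+j+m))"] unfolding P2_def
    by (simp add: add_ac)
  have A3: "(\<Prod>m\<in>{..n}-{k}. gpsi ^ k * gphi ^ m - gphi ^ k * gpsi ^ m) = (-1) ^ e3 * (sqrt 5 ^ n * FF k * FF (n - k))"
    using A3_eq[OF k] unfolding e3_def by (simp add: power_add mult.assoc)
  have A4: "(\<Prod>l\<in>{..n}-{j}. gphi ^ (a + j) * gpsi ^ (a + l) - gpsi ^ (a + j) * gphi ^ (a + l)) = (-1) ^ e4 * (sqrt 5 ^ n * FF j * FF (n - j))"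
    using A4_eq[OF j, of a] unfolding e4_def by (simp add: power_add mult.assoc)
  have S: "(-1::real) powi (int n * int (a+k+j) - int (k choose 2) - int (j choose 2)) = (-1) ^ (n + e3 + e4)"
    using sign_eq[OF k j, of a] unfolding e3_def e4_def by simp
  have L: "(-1::real) powi (int n * int (a+k+j) - int (k choose 2) - int (j choose 2))
      * real (fib (a+k+j)) * fibonomial (a+n+k) (n-j) * fibonomial (a+n+j) (n-k)
      * fibonomial (a+k+j-1) k * fibonomial (a+k+j-1) j
      = (-1) ^ (n + e3 + e4) * real (fib (a+k+j)) * (P1 / (FF (n-j) * FF j)) * (P2 / (FF (n-k) * FF k))"
    unfolding S F1[symmetric] F2[symmetric] by (simp add: ac_simps)
  have nz: "FF k \<noteq> 0" "FF (n-k) \<noteq> 0" "FF j \<noteq> 0" "FF (n-j) \<noteq> 0" "sqrt 5 \<noteq> (0::real)"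
    by (simp_all add: FF_nz)
  show ?thesis
    unfolding L A1 A2 A3 A4 div_signs
    using nz by (simp add: field_simps power_add)
qed

lemma aux_div: "f \<noteq> 0 \<Longrightarrow> s \<noteq> 0 \<Longrightarrow> 1 / f * (c / s) = 1 / (s * f) * (c::real)"
  by simp

lemma HB_entry:
  fixes a n i j :: nat
  assumes a: "a \<ge> 1" and i: "i \<le> n" and j: "j \<le> n"
  shows "(\<Sum>k\<le>n. 1 / real (fib (a+i+k)) *
     ((-1::real) powi (int n * int (a+k+j) - int (k choose 2) - int (j choose 2))
      * real (fib (a+k+j)) * fibonomial (a+n+k) (n-j) * fibonomial (a+n+j) (n-k)
      * fibonomial (a+k+j-1) k * fibonomial (a+k+j-1) j)) = (if i = j then 1 else 0)"
proof -
  have fpos: "real (fib m) \<noteq> 0" if "m > 0" for m using fib_neq_0_nat[OF that] by simp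
  have PQ: "gphi ^ (a + i') * gphi ^ k - gpsi ^ (a + i') * gpsi ^ k = sqrt 5 * real (fib (a + i' + k))" for i' k
    using binet[of "a + i' + k"] by (simp add: power_add)
  have h1: "\<And>i. i \<le> n \<Longrightarrow> gpsi ^ (a + i) \<noteq> 0" using gpsi_nz by auto
  have h2: "\<And>k. k \<le> n \<Longrightarrow> gphi ^ k \<noteq> 0" using gphi_nz by auto
  have h3: "\<And>i k. i \<le> n \<Longrightarrow> k \<le> n \<Longrightarrow> gphi ^ (a + i) * gphi ^ k - gpsi ^ (a + i) * gpsi ^ k \<noteq> 0"
    unfolding PQ using a fpos by simp
  have h4: "\<And>k m. k \<le> n \<Longrightarrow> m \<le> n \<Longrightarrow> k \<noteq> m \<Longrightarrow> gpsi ^ k * gphi ^ m - gphi ^ k * gpsi ^ m \<noteq> 0"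
  proof -
    fix k m :: nat assume "k \<noteq> m"
    then consider "k < m" | "m < k" by linarith
    thus "gpsi ^ k * gphi ^ m - gphi ^ k * gpsi ^ m \<noteq> 0"
      by cases (auto simp: br_QQ_gt br_QQ_lt intro!: fib_neq_0_nat)
  qed
  have h5: "\<And>j l. j \<le> n \<Longrightarrow> l \<le> n \<Longrightarrow> j \<noteq> l \<Longrightarrow> gphi ^ (a + j) * gpsi ^ (a + l) - gpsi ^ (a + j) * gphi ^ (a + l) \<noteq> 0"
  proof -
    fix j l :: nat assume "j \<noteq> l"
    then consider "j < l" | "l < j" by linarith
    thus "gphi ^ (a + j) * gpsi ^ (a + l) - gpsi ^ (a + j) * gphi ^ (a + l) \<noteq> 0"
    proof cases
      case 1
      hence e: "a + l = a + j + (l - j)" by simp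
      show ?thesis unfolding e fib_cross using 1 fpos by simp
    next
      case 2
      hence e: "a + j = a + l + (j - l)" by simp
      have "gphi ^ (a + j) * gpsi ^ (a + l) - gpsi ^ (a + j) * gphi ^ (a + l)
        = - (gphi ^ (a + l) * gpsi ^ (a + l + (j - l)) - gpsi ^ (a + l) * gphi ^ (a + l + (j - l)))"
        unfolding e[symmetric] by (simp add: algebra_simps)
      thus ?thesis unfolding fib_cross using 2 fpos by simp
    qed
  qed
  have C: "(\<Sum>k\<le>n. 1 / (gphi ^ (a + i) * gphi ^ k - gpsi ^ (a + i) * gpsi ^ k) *
     ((\<Prod>l\<in>{..n}-{j}. gpsi ^ k * gpsi ^ (a + l) - gphi ^ k * gphi ^ (a + l)) * (\<Prod>m\<le>n. gphi ^ (a + j) * gphi ^ m - gpsi ^ (a + j) * gpsi ^ m) /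
      ((\<Prod>m\<in>{..n}-{k}. gpsi ^ k * gphi ^ m - gphi ^ k * gpsi ^ m) * (\<Prod>l\<in>{..n}-{j}. gphi ^ (a + j) * gpsi ^ (a + l) - gpsi ^ (a + j) * gphi ^ (a + l)))))
    = (if i = j then 1 else 0)"
    by (rule cauchy_hom[of n "\<lambda>i. gpsi ^ (a + i)" "\<lambda>k. gphi ^ k" "\<lambda>i. gphi ^ (a + i)" "\<lambda>k. gpsi ^ k", OF h1 h2 h3 h4 h5 i j])
  have "(\<Sum>k\<le>n. 1 / real (fib (a+i+k)) *
     ((-1::real) powi (int n * int (a+k+j) - int (k choose 2) - int (j choose 2))
      * real (fib (a+k+j)) * fibonomial (a+n+k) (n-j) * fibonomial (a+n+j) (n-k)
      * fibonomial (a+k+j-1) k * fibonomial (a+k+j-1) j))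
    = (\<Sum>k\<le>n. 1 / (gphi ^ (a + i) * gphi ^ k - gpsi ^ (a + i) * gpsi ^ k) *
     ((\<Prod>l\<in>{..n}-{j}. gpsi ^ k * gpsi ^ (a + l) - gphi ^ k * gphi ^ (a + l)) * (\<Prod>m\<le>n. gphi ^ (a + j) * gphi ^ m - gpsi ^ (a + j) * gpsi ^ m) /
      ((\<Prod>m\<in>{..n}-{k}. gpsi ^ k * gphi ^ m - gphi ^ k * gpsi ^ m) * (\<Prod>l\<in>{..n}-{j}. gphi ^ (a + j) * gpsi ^ (a + l) - gpsi ^ (a + j) * gphi ^ (a + l)))))"
  proof (intro sum.cong refl)
    fix k assume k: "k \<in> {..n}"
    hence k': "k \<le> n" by simp
    have nz: "sqrt 5 \<noteq> (0::real)" "real (fib (a+i+k)) \<noteq> 0" using a fpos by auto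
    show "1 / real (fib (a+i+k)) *
     ((-1::real) powi (int n * int (a+k+j) - int (k choose 2) - int (j choose 2))
      * real (fib (a+k+j)) * fibonomial (a+n+k) (n-j) * fibonomial (a+n+j) (n-k)
      * fibonomial (a+k+j-1) k * fibonomial (a+k+j-1) j)
      = 1 / (gphi ^ (a + i) * gphi ^ k - gpsi ^ (a + i) * gpsi ^ k) *
     ((\<Prod>l\<in>{..n}-{j}. gpsi ^ k * gpsi ^ (a + l) - gphi ^ k * gphi ^ (a + l)) * (\<Prod>m\<le>n. gphi ^ (a + j) * gphi ^ m - gpsi ^ (a + j) * gpsi ^ m) /
      ((\<Prod>m\<in>{..n}-{k}. gpsi ^ k * gphi ^ m - gphi ^ k * gpsi ^ m) * (\<Prod>l\<in>{..n}-{j}. gphi ^ (a + j) * gpsi ^ (a + l) - gpsi ^ (a + j) * gphi ^ (a + l))))"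
      unfolding entry[OF a k' j] PQ by (rule aux_div) (use nz in auto)
  qed
  thus ?thesis using C by simp
qed

theorem theorem3p4:
  fixes \<alpha> n :: nat
  assumes "\<alpha> \<ge> 1"
  defines "H \<equiv> mat (n+1) (n+1) (\<lambda>(i,j). 1 / real (fib (\<alpha>+i+j)))"
      and "B \<equiv> mat (n+1) (n+1) (\<lambda>(i,j).
              (-1::real) powi (int n * int (\<alpha>+i+j) - int (i choose 2) - int (j choose 2))
              * real (fib (\<alpha>+i+j))
              * fibonomial (\<alpha>+n+i) (n-j) * fibonomial (\<alpha>+n+j) (n-i)
              * fibonomial (\<alpha>+i+j-1) i * fibonomial (\<alpha>+i+j-1) j)"
  shows "H * B = 1\<^sub>m (n+1) \<and> B * H = 1\<^sub>m (n+1)"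
proof -
  have Hc: "H \<in> carrier_mat (n+1) (n+1)" and Bc: "B \<in> carrier_mat (n+1) (n+1)"
    unfolding H_def B_def by auto
  have HB: "H * B = 1\<^sub>m (n+1)"
  proof (rule eq_matI)
    fix i j assume i: "i < dim_row (1\<^sub>m (n+1))" and j: "j < dim_col (1\<^sub>m (n+1))"
    hence i': "i \<le> n" and j': "j \<le> n" by auto
    have "(H * B) $$ (i, j) = (\<Sum>k\<in>{0..<n+1}. H $$ (i, k) * B $$ (k, j))"
      using i j Hc Bc by (simp add: scalar_prod_def)
    also have "\<dots> = (\<Sum>k\<le>n. 1 / real (fib (\<alpha>+i+k)) *
     ((-1::real) powi (int n * int (\<alpha>+k+j) - int (k choose 2) - int (j choose 2))
      * real (fib (\<alpha>+k+j)) * fibonomial (\<alpha>+n+k) (n-j) * fibonomial (\<alpha>+n+j) (n-k)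
      * fibonomial (\<alpha>+k+j-1) k * fibonomial (\<alpha>+k+j-1) j))"
      unfolding atLeast0LessThan lessThan_Suc_atMost[symmetric] Suc_eq_plus1[symmetric]
      using i' j' by (intro sum.cong refl) (auto simp: H_def B_def)
    also have "\<dots> = (if i = j then 1 else 0)" by (rule HB_entry[OF assms(1) i' j'])
    also have "\<dots> = 1\<^sub>m (n+1) $$ (i, j)" using i j by simp
    finally show "(H * B) $$ (i, j) = 1\<^sub>m (n+1) $$ (i, j)" .
  qed (use Hc Bc in auto)
  moreover have "B * H = 1\<^sub>m (n+1)" by (rule mat_mult_left_right_inverse[OF Hc Bc HB])
  ultimately show ?thesis by simp
qed

end
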